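(* Let $Y$ be a compact set in $\mathbb{C}^N$, let $x_0\in Y$, let $\varepsilon>0$, and let $\{p_j\}$ be a countable collection of polynomials on $\mathbb{C}^N$ with $p_j(x_0)\neq 0$ for all $j$. Then there exists a totally disconnected, compact, polynomially convex set $E$ with $x_0\in E\subset Y$ such that (i) each $p_j$ has no zeros on $E$, and (ii) $m(Y\setminus E)<\varepsilon$.
   Context: $m$ denotes $2N$-dimensional Lebesgue measure on $\mathbb{C}^N$. For compact $X\subset\mathbb{C}^N$, $\widehat X=\{z\in\mathbb{C}^N: |p(z)|\le \max_X|p| \text{ for all polynomials } p\}$, and $X$ is polynomially convex if $\widehat X=X$. *)

theory Defs
  imports "HOL-Analysis.Analysis"
begin

inductive cpoly :: "(complex ^ 'n \<Rightarrow> complex) \<Rightarrow> bool" where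
  cpoly_const: "cpoly (\<lambda>z. c)"
| cpoly_coord: "cpoly (\<lambda>z. z $ i)"
| cpoly_add: "cpoly p \<Longrightarrow> cpoly q \<Longrightarrow> cpoly (\<lambda>z. p z + q z)"
| cpoly_mult: "cpoly p \<Longrightarrow> cpoly q \<Longrightarrow> cpoly (\<lambda>z. p z * q z)"

definition poly_hull :: "(complex ^ 'n) set \<Rightarrow> (complex ^ 'n) set" where
  "poly_hull X = {z. \<forall>p. cpoly p \<longrightarrow> norm (p z) \<le> (SUP x\<in>X. norm (p x))}"

definition polynomially_convex :: "(complex ^ 'n) set \<Rightarrow> bool" where
  "polynomially_convex X \<longleftrightarrow> poly_hull X = X"

definition totally_disconnected :: "'a::topological_space set \<Rightarrow> bool" where
  "totally_disconnected S \<longleftrightarrow> (\<forall>x\<in>S. connected_component_set S x = {x})"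

end

theory Submission
  imports Defs "HOL-Computational_Algebra.Fundamental_Theorem_Algebra"
begin

lemma cpoly_continuous: "cpoly p \<Longrightarrow> continuous_on UNIV p"
  by (induction rule: cpoly.induct) (auto intro!: continuous_intros)

lemma cpoly_line: "cpoly p \<Longrightarrow> \<exists>q. \<forall>t. p (a + t *s b) = poly q t"
proof (induction rule: cpoly.induct)
  case (cpoly_const c) then show ?case by (rule_tac x="[:c:]" in exI) simp
next
  case (cpoly_coord i) then show ?case by (rule_tac x="[:a$i, b$i:]" in exI) (simp add: algebra_simps)
next
  case (cpoly_add p q)
  then obtain q1 q2 where "\<forall>t. p (a + t *s b) = poly q1 t" "\<forall>t. q (a + t *s b) = poly q2 t" by blast
  then show ?case by (rule_tac x="q1+q2" in exI) simp
next
  case (cpoly_mult p q)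
  then obtain q1 q2 where "\<forall>t. p (a + t *s b) = poly q1 t" "\<forall>t. q (a + t *s b) = poly q2 t" by blast
  then show ?case by (rule_tac x="q1*q2" in exI) simp
qed

definition SJ :: "(complex^'n \<Rightarrow> complex) \<Rightarrow> 'n set \<Rightarrow> (complex^'n) set" where
  "SJ p K = {y. \<forall>u. (\<forall>i. i \<notin> K \<longrightarrow> u$i = 0) \<longrightarrow> p (y + u) = 0}"

lemma SJ_closed: assumes "cpoly p" shows "closed (SJ p K)"
proof -
  have "SJ p K = (\<Inter>u\<in>{u. \<forall>i. i \<notin> K \<longrightarrow> u$i = 0}. {y. p (y + u) = 0})"
    by (auto simp: SJ_def)
  moreover have "closed {y. p (y + u) = 0}" for u
  proof -
    have "continuous_on UNIV (p \<circ> (\<lambda>y. y+u))"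
      by (rule continuous_on_compose) (auto intro: continuous_intros cpoly_continuous[OF assms] continuous_on_subset)
    then show ?thesis by (intro closed_Collect_eq) (auto simp: o_def)
  qed
  ultimately show ?thesis by auto
qed

lemma SJ_slice_finite:
  assumes "cpoly p" "y \<notin> SJ p (insert i K)"
  shows "finite {t. y + t *s axis i 1 \<in> SJ p K}"
proof -
  from assms(2) obtain u where u: "\<forall>j. j \<notin> insert i K \<longrightarrow> u$j = 0" "p (y + u) \<noteq> 0"
    by (auto simp: SJ_def)
  define u' where "u' = u - (u$i) *s axis i 1"
  have u': "\<forall>j. j \<notin> K \<longrightarrow> u'$j = 0"
    using u(1) by (auto simp: u'_def axis_def)
  obtain q where q: "\<forall>t. p ((y + u') + t *s axis i 1) = poly q t"
    using cpoly_line[OF assms(1)] by blast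
  have "y + u' + u$i *s axis i 1 = y + u" by (simp add: u'_def)
  with q u(2) have "poly q (u$i) \<noteq> 0" by metis
  then have "q \<noteq> 0" by auto
  have "{t. y + t *s axis i 1 \<in> SJ p K} \<subseteq> {t. poly q t = 0}"
  proof
    fix t assume "t \<in> {t. y + t *s axis i 1 \<in> SJ p K}"
    then have "p (y + t *s axis i 1 + u') = 0" using u' by (auto simp: SJ_def)
    then show "t \<in> {t. poly q t = 0}" using q by (simp add: algebra_simps)
  qed
  then show ?thesis using poly_roots_finite[OF \<open>q \<noteq> 0\<close>] finite_subset by blast
qed

lemma SJ_step_null:
  fixes p :: "complex^'n \<Rightarrow> complex"
  assumes p: "cpoly p" and i: "i \<notin> K" and N: "SJ p (insert i K) \<in> null_sets lborel"
  shows "SJ p K \<in> null_sets lborel"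
proof -
  let ?S = "SJ p K" and ?S' = "SJ p (insert i K)" and ?e = "axis i (1::complex) :: complex^'n"
  let ?D = "cbox (0::complex) (1 + \<i>)"
  define F where "F = {z :: (complex^'n) \<times> complex. snd z \<in> ?D \<and> fst z + snd z *s ?e \<in> ?S}"
  have clS: "closed ?S" using SJ_closed[OF p] .
  have "closed F"
  proof -
    have "F = (\<lambda>z. snd z) -` ?D \<inter> (\<lambda>z. fst z + snd z *s ?e) -` ?S" by (auto simp: F_def)
    moreover have "closed ((\<lambda>z::(complex^'n) \<times> complex. snd z) -` ?D)"
      by (intro continuous_closed_vimage) (auto intro: continuous_intros)
    moreover have "closed ((\<lambda>z::(complex^'n) \<times> complex. fst z + snd z *s ?e) -` ?S)"
    proof -
      have "continuous_on UNIV (\<lambda>z::(complex^'n)\<times>complex. fst z + snd z *s ?e)"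
        unfolding vector_scalar_mult_def by (intro continuous_intros continuous_on_vec_lambda)
      then show ?thesis using clS closed_vimage by blast
    qed
    ultimately show ?thesis by auto
  qed
  then have Fs: "F \<in> sets (lborel \<Otimes>\<^sub>M lborel)" unfolding lborel_prod by simp
  have Ss: "?S \<in> sets lborel" using clS by simp
  have "emeasure (lborel \<Otimes>\<^sub>M lborel) F = (\<integral>\<^sup>+y. emeasure lborel (Pair y -` F) \<partial>lborel)"
    by (rule lborel.emeasure_pair_measure_alt[OF Fs])
  also have "\<dots> = (\<integral>\<^sup>+y. 0 \<partial>(lborel :: (complex^'n) measure))"
  proof (rule nn_integral_cong_AE)
    show "AE y in lborel. emeasure lborel (Pair y -` F) = 0"
    proof (rule AE_I'[OF N], safe)
      fix y assume "y \<in> space lborel" "emeasure lborel (Pair y -` F) \<noteq> 0"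
      moreover have "y \<notin> ?S' \<Longrightarrow> emeasure lborel (Pair y -` F) = 0"
      proof -
        assume "y \<notin> ?S'"
        then have "finite {t. y + t *s ?e \<in> ?S}" by (rule SJ_slice_finite[OF p])
        moreover have "Pair y -` F \<subseteq> {t. y + t *s ?e \<in> ?S}" by (auto simp: F_def)
        ultimately have "finite (Pair y -` F)" by (rule finite_subset[rotated])
        then show ?thesis by (simp add: emeasure_lborel_countable countable_finite)
      qed
      ultimately show "y \<in> ?S'" by blast
    qed
  qed
  also have "\<dots> = 0" by simp
  finally have F0: "emeasure (lborel \<Otimes>\<^sub>M lborel) F = 0" .
  have "emeasure (lborel \<Otimes>\<^sub>M lborel) F = (\<integral>\<^sup>+t. emeasure lborel ((\<lambda>y. (y, t)) -` F) \<partial>lborel)"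
    by (rule lborel_pair.emeasure_pair_measure_alt2[OF Fs])
  also have "\<dots> = (\<integral>\<^sup>+t. emeasure lborel ?S * indicator ?D t \<partial>lborel)"
  proof (rule nn_integral_cong)
    fix t :: complex
    show "emeasure lborel ((\<lambda>y. (y, t)) -` F) = emeasure lborel ?S * indicator ?D t"
    proof (cases "t \<in> ?D")
      case True
      then have "(\<lambda>y. (y, t)) -` F = (\<lambda>y. t *s ?e + y) -` ?S" by (auto simp: F_def add.commute)
      moreover have "emeasure lborel ((\<lambda>y. t *s ?e + y) -` ?S) = emeasure lborel ?S"
      proof -
        have "emeasure (distr lborel borel ((+) (t *s ?e))) ?S = emeasure lborel ?S"
          by (simp add: lborel_distr_plus)
        then show ?thesis using Ss by (subst (asm) emeasure_distr) auto
      qed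
      ultimately show ?thesis using True by simp
    next
      case False
      then have "(\<lambda>y. (y, t)) -` F = {}" by (auto simp: F_def)
      then show ?thesis using False by simp
    qed
  qed
  also have "\<dots> = emeasure lborel ?S * emeasure lborel ?D"
    by (simp add: nn_integral_cmult_indicator)
  finally have "emeasure lborel ?S * emeasure lborel ?D = 0" using F0 by simp
  moreover have "emeasure lborel ?D = 1"
    by (simp add: emeasure_lborel_cbox_eq Basis_complex_def inner_complex_def)
  ultimately have "emeasure lborel ?S = 0" by simp
  then show ?thesis using Ss by (simp add: null_sets_def)
qed

lemma cpoly_zero_null:
  fixes p :: "complex^'n \<Rightarrow> complex"
  assumes p: "cpoly p" and x0: "p x0 \<noteq> 0"
  shows "{z. p z = 0} \<in> null_sets lborel"
proof -
  have "SJ p (UNIV - J) \<in> null_sets lborel" if "finite J" for J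
    using that
  proof (induction J rule: finite_induct)
    case empty
    have "SJ p UNIV = {}"
    proof safe
      fix y assume "y \<in> SJ p UNIV"
      then have "p (y + (x0 - y)) = 0" unfolding SJ_def by blast
      with x0 show "y \<in> {}" by simp
    qed
    then show ?case by simp
  next
    case (insert i J)
    have eq: "insert i (UNIV - insert i J) = UNIV - J" using insert(2) by auto
    show ?case
      using SJ_step_null[OF p, of i "UNIV - insert i J"] insert(3) eq by simp
  qed
  from this[of UNIV] have "SJ p {} \<in> null_sets lborel" by simp
  moreover have "SJ p {} = {z. p z = 0}"
  proof safe
    fix z assume "z \<in> SJ p {}" 
    then have "p (z + 0) = 0" unfolding SJ_def by (simp del: add_0_right)
    then show "p z = 0" by simp
  next
    fix z assume "p z = 0"
    show "z \<in> SJ p {}" unfolding SJ_def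
    proof (intro CollectI allI impI)
      fix u :: "complex^'n" assume "\<forall>i. i \<notin> {} \<longrightarrow> u $ i = 0"
      then have "u = 0" by (simp add: vec_eq_iff)
      then show "p (z + u) = 0" using \<open>p z = 0\<close> by simp
    qed
  qed
  ultimately show ?thesis by simp
qed

definition PA :: "complex set \<Rightarrow> (complex \<Rightarrow> complex) \<Rightarrow> bool" where
  "PA K f \<longleftrightarrow> (\<forall>\<delta>>0. \<exists>q. \<forall>w\<in>K. norm (f w - poly q w) < \<delta>)"

lemma PA_poly: "PA K (poly q)"
  unfolding PA_def by (auto intro!: exI[of _ q])

lemma PA_const: "PA K (\<lambda>w. c)"
proof -
  have "poly [:c:] = (\<lambda>w. c)" by (simp add: fun_eq_iff)
  then show ?thesis using PA_poly[of K "[:c:]"] by simp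
qed

lemma PA_id: "PA K (\<lambda>w. w)"
proof -
  have "poly [:0,1:] = (\<lambda>w::complex. w)" by (simp add: fun_eq_iff)
  then show ?thesis using PA_poly[of K "[:0,1:]"] by simp
qed

lemma PA_add: assumes "PA K f" "PA K g" shows "PA K (\<lambda>w. f w + g w)"
  unfolding PA_def
proof (intro allI impI)
  fix \<delta> :: real assume "\<delta> > 0"
  then obtain p q where p: "\<forall>w\<in>K. norm (f w - poly p w) < \<delta>/2" and q: "\<forall>w\<in>K. norm (g w - poly q w) < \<delta>/2"
    using assms unfolding PA_def by (meson half_gt_zero)
  show "\<exists>r. \<forall>w\<in>K. norm (f w + g w - poly r w) < \<delta>"
  proof (intro exI ballI)
    fix w assume "w \<in> K"
    have "norm (f w + g w - poly (p + q) w) = norm ((f w - poly p w) + (g w - poly q w))"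
      by (simp add: algebra_simps)
    also have "\<dots> \<le> norm (f w - poly p w) + norm (g w - poly q w)" by (rule norm_triangle_ineq)
    also have "\<dots> < \<delta>" using p q \<open>w \<in> K\<close> by fastforce
    finally show "norm (f w + g w - poly (p + q) w) < \<delta>" .
  qed
qed

lemma PA_bounded: assumes "PA K f" "compact K" shows "\<exists>B. \<forall>w\<in>K. norm (f w) \<le> B"
proof -
  obtain q where q: "\<forall>w\<in>K. norm (f w - poly q w) < 1" using assms(1) unfolding PA_def by force
  have "compact (poly q ` K)" by (rule compact_continuous_image) (auto intro: continuous_intros assms)
  then obtain B where B: "\<forall>x\<in>poly q ` K. norm x \<le> B" using compact_imp_bounded bounded_iff by metis
  show ?thesis
  proof (intro exI ballI)
    fix w assume w: "w \<in> K"
    have "norm (f w) \<le> norm (poly q w) + norm (f w - poly q w)" by (rule norm_triangle_sub)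
    also have "\<dots> \<le> B + 1" using q B w by (intro add_mono) force+
    finally show "norm (f w) \<le> B + 1" .
  qed
qed

lemma PA_mult: assumes "PA K f" "PA K g" "compact K" shows "PA K (\<lambda>w. f w * g w)"
  unfolding PA_def
proof (intro allI impI)
  fix \<delta> :: real assume "\<delta> > 0"
  obtain Bf where Bf: "\<forall>w\<in>K. norm (f w) \<le> Bf" using PA_bounded assms by blast
  obtain Bg where Bg: "\<forall>w\<in>K. norm (g w) \<le> Bg" using PA_bounded assms by blast
  define C where "C = \<bar>Bf\<bar> + \<bar>Bg\<bar> + 2"
  have C: "C > 0" by (simp add: C_def add_pos_nonneg)
  define \<eta> where "\<eta> = min 1 (\<delta> / C)"
  have \<eta>: "\<eta> > 0" "\<eta> \<le> 1" "\<eta> \<le> \<delta> / C" using \<open>\<delta> > 0\<close> C by (auto simp: \<eta>_def)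
  obtain p where p: "\<forall>w\<in>K. norm (f w - poly p w) < \<eta>" using assms(1) \<eta> unfolding PA_def by blast
  obtain q where q: "\<forall>w\<in>K. norm (g w - poly q w) < \<eta>" using assms(2) \<eta> unfolding PA_def by blast
  show "\<exists>r. \<forall>w\<in>K. norm (f w * g w - poly r w) < \<delta>"
  proof (intro exI ballI)
    fix w assume w: "w \<in> K"
    have nq: "norm (poly q w) \<le> \<bar>Bg\<bar> + 1"
    proof -
      have "norm (poly q w) \<le> norm (g w) + norm (poly q w - g w)"
        by (rule norm_triangle_sub)
      moreover have "norm (poly q w - g w) < 1"
      proof -
        have "norm (g w - poly q w) < \<eta>" using q w by blast
        then show ?thesis using \<eta> by (simp add: norm_minus_commute)
      qed
      moreover have "norm (g w) \<le> \<bar>Bg\<bar>" using Bg w by force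
      ultimately show ?thesis by linarith
    qed
    have "f w * g w - poly (p * q) w = f w * (g w - poly q w) + (f w - poly p w) * poly q w"
      by (simp add: algebra_simps)
    then have "norm (f w * g w - poly (p * q) w) \<le> norm (f w) * norm (g w - poly q w) + norm (f w - poly p w) * norm (poly q w)"
      by (metis norm_mult norm_triangle_ineq)
    also have "\<dots> \<le> \<bar>Bf\<bar> * \<eta> + \<eta> * (\<bar>Bg\<bar> + 1)"
    proof (rule add_mono)
      have "norm (f w) \<le> \<bar>Bf\<bar>" using Bf w by force
      moreover have "norm (g w - poly q w) \<le> \<eta>" using q w by (simp add: less_imp_le)
      ultimately show "norm (f w) * norm (g w - poly q w) \<le> \<bar>Bf\<bar> * \<eta>"
        by (intro mult_mono) auto
      have "norm (f w - poly p w) \<le> \<eta>" using p w by (simp add: less_imp_le)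
      then show "norm (f w - poly p w) * norm (poly q w) \<le> \<eta> * (\<bar>Bg\<bar> + 1)"
        using nq \<eta> by (intro mult_mono) auto
    qed
    also have "\<dots> = \<eta> * (\<bar>Bf\<bar> + \<bar>Bg\<bar> + 1)" by (simp add: algebra_simps)
    also have "\<dots> < \<eta> * C" using \<eta> by (simp add: C_def)
    also have "\<dots> \<le> \<delta>" using \<eta> C by (simp add: field_simps)
    finally show "norm (f w * g w - poly (p * q) w) < \<delta>" .
  qed
qed

lemma PA_cmult: assumes "PA K f" "compact K" shows "PA K (\<lambda>w. c * f w)"
  using PA_mult[OF PA_const assms] .

lemma PA_power: assumes "PA K f" "compact K" shows "PA K (\<lambda>w. f w ^ n)"
  by (induction n) (auto intro: PA_const PA_mult assms)

lemma PA_sum: assumes "finite I" "\<And>i. i \<in> I \<Longrightarrow> PA K (f i)" shows "PA K (\<lambda>w. \<Sum>i\<in>I. f i w)"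
  using assms by (induction I rule: finite_induct) (auto intro: PA_const PA_add)

lemma PA_prod: assumes "finite I" "\<And>i. i \<in> I \<Longrightarrow> PA K (f i)" "compact K" shows "PA K (\<lambda>w. \<Prod>i\<in>I. f i w)"
  using assms by (induction I rule: finite_induct) (auto intro: PA_const PA_mult)

lemma PA_limit:
  assumes "\<And>\<delta>. \<delta> > 0 \<Longrightarrow> \<exists>h. PA K h \<and> (\<forall>w\<in>K. norm (f w - h w) \<le> \<delta>)"
  shows "PA K f"
  unfolding PA_def
proof (intro allI impI)
  fix \<delta> :: real assume "\<delta> > 0"
  then obtain h where h: "PA K h" "\<forall>w\<in>K. norm (f w - h w) \<le> \<delta>/2" using assms[of "\<delta>/2"] by auto
  then obtain q where q: "\<forall>w\<in>K. norm (h w - poly q w) < \<delta>/2" using \<open>\<delta> > 0\<close> unfolding PA_def by (meson half_gt_zero)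
  show "\<exists>q. \<forall>w\<in>K. norm (f w - poly q w) < \<delta>"
  proof (intro exI ballI)
    fix w assume w: "w \<in> K"
    have "norm (f w - poly q w) \<le> norm (f w - h w) + norm (h w - poly q w)" by (rule norm_diff_triangle_le) auto
    also have "\<dots> < \<delta>" using h q w by fastforce
    finally show "norm (f w - poly q w) < \<delta>" .
  qed
qed

lemma PA_inv_far:
  assumes K: "compact K" and B: "\<forall>w\<in>K. norm w \<le> B" "B > 0" and b: "norm b \<ge> 2 * B"
  shows "PA K (\<lambda>w. 1 / (w - b))"
proof (rule PA_limit)
  fix \<delta> :: real assume "\<delta> > 0"
  obtain M where M: "(1/2::real) ^ M < \<delta> * B" using real_arch_pow_inv[of "\<delta> * B" "1/2"] \<open>\<delta>>0\<close> B by auto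
  have b0: "b \<noteq> 0" using b B by auto
  define h where "h = (\<lambda>w. - inverse b * (\<Sum>k<M. (inverse b * w) ^ k))"
  have "PA K h" unfolding h_def
    by (intro PA_cmult PA_sum PA_power PA_id K) auto
  moreover have "norm (1 / (w - b) - h w) \<le> \<delta>" if w: "w \<in> K" for w
  proof -
    define x where "x = inverse b * w"
    have nx: "norm x \<le> 1/2"
    proof -
      have "norm x = norm w / norm b" by (simp add: x_def norm_mult norm_inverse divide_inverse)
      also have "\<dots> \<le> B / (2 * B)" using B w b by (intro frac_le) auto
      also have "\<dots> = 1/2" using B by simp
      finally show ?thesis .
    qed
    then have x1: "x \<noteq> 1" by auto
    have n1x: "norm (1 - x) \<ge> 1/2"
    proof -
      have "1 \<le> norm (1 - x) + norm x" using norm_triangle_ineq[of "1 - x" x] by simp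
      then show ?thesis using nx by linarith
    qed
    have wb: "w - b = - b * (1 - x)" using b0 by (simp add: x_def algebra_simps)
    have "h w = - inverse b * ((1 - x ^ M) / (1 - x))"
      by (simp add: h_def x_def[symmetric] sum_gp_strict x1)
    then have "1 / (w - b) - h w = - inverse b * x ^ M / (1 - x)"
      using b0 x1 by (simp add: wb field_simps)
    then have "norm (1 / (w - b) - h w) = norm x ^ M / (norm b * norm (1 - x))"
      by (simp add: norm_mult norm_divide norm_power norm_inverse divide_inverse)
    also have "\<dots> \<le> (1/2) ^ M / (2 * B * (1/2))"
      using nx n1x b B by (intro frac_le mult_mono power_mono) auto
    also have "\<dots> = (1/2) ^ M / B" by simp
    also have "\<dots> \<le> \<delta>" using M B by (simp add: field_simps)
    finally show ?thesis .
  qed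
  ultimately show "\<exists>h. PA K h \<and> (\<forall>w\<in>K. norm (1 / (w - b) - h w) \<le> \<delta>)" by blast
qed

lemma PA_push:
  assumes K: "compact K" and d: "d > 0" and Kd: "\<forall>w\<in>K. norm (w - b) \<ge> d"
    and P: "PA K (\<lambda>w. 1 / (w - b))" and bb: "norm (b' - b) \<le> d / 2"
  shows "PA K (\<lambda>w. 1 / (w - b'))"
proof (rule PA_limit)
  fix \<delta> :: real assume "\<delta> > 0"
  obtain M where M: "(1/2::real) ^ M < \<delta> * d / 2" using real_arch_pow_inv[of "\<delta> * d / 2" "1/2"] \<open>\<delta>>0\<close> d by auto
  define c where "c = b' - b"
  define h where "h = (\<lambda>w. \<Sum>k<M. c ^ k * (1 / (w - b)) ^ Suc k)"
  have "PA K h" unfolding h_def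
    by (intro PA_cmult PA_sum PA_power P K) auto
  moreover have "norm (1 / (w - b') - h w) \<le> \<delta>" if w: "w \<in> K" for w
  proof -
    define u where "u = 1 / (w - b)"
    define x where "x = c * u"
    have wb0: "w - b \<noteq> 0" using Kd w d by force
    have nu: "norm u \<le> 1 / d"
    proof -
      have "norm (w - b) \<ge> d" using Kd w by blast
      moreover have "0 < norm (w - b) * d" using d \<open>norm (w - b) \<ge> d\<close> by (metis mult_pos_pos order_less_le_trans)
      ultimately have "1 / norm (w - b) \<le> 1 / d" using d by (intro divide_left_mono) auto
      then show ?thesis by (simp add: u_def norm_divide)
    qed
    have nx: "norm x \<le> 1/2"
    proof -
      have "norm x \<le> (d/2) * (1/d)" unfolding x_def norm_mult
        using bb nu d by (intro mult_mono) (auto simp: c_def)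
      then show ?thesis using d by simp
    qed
    then have x1: "x \<noteq> 1" by auto
    have n1x: "norm (1 - x) \<ge> 1/2"
    proof -
      have "1 \<le> norm (1 - x) + norm x" using norm_triangle_ineq[of "1 - x" x] by simp
      then show ?thesis using nx by linarith
    qed
    have hw: "h w = u * ((1 - x ^ M) / (1 - x))"
    proof -
      have "h w = (\<Sum>k<M. c ^ k * u ^ Suc k)" by (simp add: h_def u_def)
      also have "\<dots> = u * (\<Sum>k<M. x ^ k)"
        by (simp add: x_def sum_distrib_left power_mult_distrib mult_ac)
      finally have "h w = u * (\<Sum>k<M. x ^ k)" .
      then show ?thesis by (simp add: sum_gp_strict x1)
    qed
    have wb': "w - b' = (w - b) * (1 - x)" using wb0 by (simp add: x_def u_def c_def field_simps)
    have x1': "1 - x \<noteq> 0" using x1 by simp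
    have e1: "1 / (w - b') = u / (1 - x)" using wb0 x1' by (simp add: wb' u_def)
    have "1 / (w - b') - h w = u * x ^ M / (1 - x)"
    proof -
      have "u / (1 - x) - u * ((1 - x ^ M) / (1 - x)) = (u - u * (1 - x ^ M)) / (1 - x)"
      proof -
        have gen: "\<And>u a z::complex. z \<noteq> 0 \<Longrightarrow> u / z - u * (a / z) = (u - u * a) / z"
          by (simp add: field_simps)
        show ?thesis using gen[OF x1'] .
      qed
      also have "u - u * (1 - x ^ M) = u * x ^ M" by (simp add: algebra_simps)
      finally show ?thesis unfolding e1 hw .
    qed
    then have "norm (1 / (w - b') - h w) = norm u * norm x ^ M / norm (1 - x)"
      by (simp add: norm_mult norm_divide norm_power)
    also have "\<dots> \<le> (1 / d) * (1/2) ^ M / (1/2)"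
      using nx n1x nu d by (intro frac_le mult_mono power_mono) auto
    also have "\<dots> \<le> \<delta>" using M d by (simp add: field_simps)
    finally show ?thesis .
  qed
  ultimately show "\<exists>h. PA K h \<and> (\<forall>w\<in>K. norm (1 / (w - b') - h w) \<le> \<delta>)" by blast
qed

lemma PA_line:
  assumes K: "compact K" and B: "\<forall>w\<in>K. norm w \<le> B" and d: "d > 0" and v: "norm v = 1"
    and far: "\<forall>t\<ge>0. \<forall>w\<in>K. d \<le> norm (w - (b + of_real t * v))"
  shows "PA K (\<lambda>w. 1 / (w - b))"
proof -
  define B' where "B' = max B 1"
  have B': "B' > 0" "\<forall>w\<in>K. norm w \<le> B'" using B by (auto simp: B'_def intro: order_trans)
  define s where "s = d / 2"
  have s: "s > 0" using d by (simp add: s_def)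
  obtain n :: nat where n: "(2 * B' + norm b) / s \<le> real n" using real_arch_simple by blast
  have ns: "2 * B' + norm b \<le> real n * s" using n s by (simp add: field_simps)
  define P where "P = (\<lambda>m::nat. PA K (\<lambda>w. 1 / (w - (b + of_real (real m * s) * v))))"
  have "P n" unfolding P_def
  proof (rule PA_inv_far[OF K B'(2) B'(1)])
    have "real n * s = norm (of_real (real n * s) * v)" using v s by (simp add: norm_mult)
    also have "\<dots> \<le> norm (b + of_real (real n * s) * v) + norm b"
      by (metis add_diff_cancel_left' norm_triangle_sub add.commute norm_minus_commute)
    finally show "2 * B' \<le> norm (b + of_real (real n * s) * v)" using ns by linarith
  qed
  then have "P 0"
  proof (rule inc_induct[of 0 n P, rotated])
    fix m assume "0 \<le> m" "m < n" and Pm: "P (Suc m)"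
    show "P m" unfolding P_def
    proof (rule PA_push[OF K d _ Pm[unfolded P_def]])
      show "\<forall>w\<in>K. d \<le> norm (w - (b + of_real (real (Suc m) * s) * v))"
      proof
        fix w assume w: "w \<in> K"
        have "real (Suc m) * s \<ge> 0" using s by simp
        then show "d \<le> norm (w - (b + of_real (real (Suc m) * s) * v))"
          using far w by blast
      qed
      have "(b + of_real (real m * s) * v) - (b + of_real (real (Suc m) * s) * v) = - of_real s * v"
        by (simp add: algebra_simps)
      then show "norm ((b + of_real (real m * s) * v) - (b + of_real (real (Suc m) * s) * v)) \<le> d / 2"
        using v s by (simp add: norm_mult s_def)
    qed
  qed simp
  then show ?thesis by (simp add: P_def)
qed

lemma PA_cong: assumes "PA K f" "\<And>w. w \<in> K \<Longrightarrow> f w = g w" shows "PA K g"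
  using assms unfolding PA_def by auto

definition Dp :: "nat \<Rightarrow> complex poly" where "Dp n = [:1,1:]^n + [:-1,1:]^n"

lemma poly_Dp: "poly (Dp n) w = (1 + w)^n + (w - 1)^n"
  by (simp add: Dp_def)

lemma Dp_nz: "Dp n \<noteq> 0"
proof
  assume "Dp n = 0"
  then have "poly (Dp n) 1 = 0" by simp
  then show False by (cases n) (auto simp: poly_Dp)
qed

lemma Dp_root: assumes "n > 0" "poly (Dp n) z = 0" shows "Re z = 0"
proof -
  have "(1 + z)^n = - ((z - 1)^n)" using assms(2) by (simp add: poly_Dp add_eq_0_iff)
  then have "norm ((1 + z) ^ n) = norm (- ((z - 1)^n))" by simp
  then have "norm (1 + z) ^ n = norm (z - 1) ^ n" by (simp only: norm_minus_cancel norm_power)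
  then have "norm (1 + z) = norm (z - 1)" using power_eq_imp_eq_base[OF _ norm_ge_zero norm_ge_zero assms(1)] by blast
  then have "norm (1 + z)^2 = norm (z - 1)^2" by simp
  then have "(1 + Re z)^2 + (Im z)^2 = (Re z - 1)^2 + (Im z)^2" by (simp add: cmod_power2)
  then show ?thesis by (simp add: power2_eq_square algebra_simps)
qed

lemma compact_bound: assumes "compact K" obtains B where "\<forall>w\<in>K. norm w \<le> B"
  using compact_imp_bounded[OF assms] bounded_iff by metis

lemma PA_inv_line_root:
  assumes K: "compact K" and g: "g > 0" and Kg: "\<forall>w\<in>K. \<bar>Re w\<bar> \<ge> g" and z: "Re z = 0"
  shows "PA K (\<lambda>w. 1 / (w - z))"
proof -
  obtain B where B: "\<forall>w\<in>K. norm w \<le> B" using compact_bound[OF K] by blast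
  show ?thesis
  proof (rule PA_line[OF K B g, of \<i>])
    show "\<forall>t\<ge>0. \<forall>w\<in>K. g \<le> norm (w - (z + of_real t * \<i>))"
    proof (intro allI impI ballI)
      fix t :: real and w assume "w \<in> K"
      then have "g \<le> \<bar>Re (w - (z + of_real t * \<i>))\<bar>" using Kg z by simp
      also have "\<dots> \<le> norm (w - (z + of_real t * \<i>))" by (rule abs_Re_le_cmod)
      finally show "g \<le> norm (w - (z + of_real t * \<i>))" .
    qed
  qed simp
qed

lemma PA_invDp:
  assumes K: "compact K" and n: "n > 0" and g: "g > 0" and Kg: "\<forall>w\<in>K. \<bar>Re w\<bar> \<ge> g"
  shows "PA K (\<lambda>w. 1 / poly (Dp n) w)"
proof -
  let ?p = "Dp n"
  let ?Z = "{z. poly ?p z = 0}"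
  have fin: "finite ?Z" using poly_roots_finite[OF Dp_nz] .
  have dec: "poly ?p w = lead_coeff ?p * (\<Prod>z\<in>?Z. (w - z) ^ order z ?p)" for w
  proof -
    have e: "smult (lead_coeff ?p) (\<Prod>z|poly ?p z = 0. [:-z, 1:] ^ order z ?p) = ?p"
      by (rule complex_poly_decompose)
    have "poly ?p w = poly (smult (lead_coeff ?p) (\<Prod>z|poly ?p z = 0. [:-z, 1:] ^ order z ?p)) w"
      by (simp only: e)
    also have "\<dots> = lead_coeff ?p * (\<Prod>z\<in>?Z. (w - z) ^ order z ?p)"
      by (simp add: poly_prod poly_power)
    finally show ?thesis .
  qed
  have lc: "lead_coeff ?p \<noteq> 0" using Dp_nz by simp
  have "PA K (\<lambda>w. inverse (lead_coeff ?p) * (\<Prod>z\<in>?Z. (1 / (w - z)) ^ order z ?p))"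
    by (intro PA_cmult PA_prod PA_power K fin PA_inv_line_root[OF K g Kg])
       (use Dp_root[OF n] in auto)
  then show ?thesis
  proof (rule PA_cong)
    fix w assume "w \<in> K"
    have inv: "inverse (\<Prod>z\<in>?Z. (w - z) ^ order z ?p) = (\<Prod>z\<in>?Z. inverse ((w - z) ^ order z ?p))"
      using prod_inversef[of "\<lambda>z. (w - z) ^ order z ?p" ?Z] by (simp add: o_def)
    have pw: "(1 / (w - z)) ^ m = inverse ((w - z) ^ m)" for z m
      by (simp add: power_inverse divide_inverse)
    have "1 / poly ?p w = inverse (lead_coeff ?p * (\<Prod>z\<in>?Z. (w - z) ^ order z ?p))"
      by (simp only: dec[of w] inverse_eq_divide)
    also have "\<dots> = inverse (lead_coeff ?p) * (\<Prod>z\<in>?Z. inverse ((w - z) ^ order z ?p))"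
      by (simp only: inverse_mult_distrib inv)
    also have "\<dots> = inverse (lead_coeff ?p) * (\<Prod>z\<in>?Z. (1 / (w - z)) ^ order z ?p)"
      by (simp only: pw)
    finally show "inverse (lead_coeff ?p) * (\<Prod>z\<in>?Z. (1 / (w - z)) ^ order z ?p) = 1 / poly ?p w" by (rule sym)
  qed
qed

lemma ratio_bound:
  fixes a b :: complex and \<rho> :: real
  assumes "0 \<le> \<rho>" "\<rho> ^ n \<le> 1/2" "norm b \<le> \<rho> * norm a" "a \<noteq> 0"
  shows "norm (b ^ n / (a ^ n + b ^ n)) \<le> 2 * \<rho> ^ n"
proof -
  have bn: "norm b ^ n \<le> \<rho> ^ n * norm a ^ n"
  proof -
    have "norm b ^ n \<le> (\<rho> * norm a) ^ n" using assms(3) by (rule power_mono) simp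
    then show ?thesis by (simp add: power_mult_distrib)
  qed
  have an: "norm a ^ n > 0" using assms by simp
  have "norm (a ^ n + b ^ n) \<ge> norm a ^ n - norm b ^ n"
    using norm_diff_ineq[of "a^n" "b^n"] by (simp add: norm_power)
  also have "norm a ^ n - norm b ^ n \<ge> norm a ^ n / 2" using bn assms(2) an
  proof -
    have "\<rho> ^ n * norm a ^ n \<le> (1/2) * norm a ^ n" using assms(2) by (rule mult_right_mono) simp
    then show ?thesis using bn by linarith
  qed
  finally have den: "norm (a ^ n + b ^ n) \<ge> norm a ^ n / 2" .
  have "norm (b ^ n / (a ^ n + b ^ n)) = norm b ^ n / norm (a ^ n + b ^ n)"
    by (simp add: norm_divide norm_power)
  also have "\<dots> \<le> (\<rho> ^ n * norm a ^ n) / (norm a ^ n / 2)"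
    using bn den an assms(1) by (intro frac_le) auto
  also have "\<dots> = 2 * \<rho> ^ n" using an assms(4) by (simp add: field_simps)
  finally show ?thesis .
qed

lemma norm_sq_shift: "norm (1 + w)^2 = norm (w - 1)^2 + 4 * Re w"
  unfolding cmod_power2 by (simp add: power2_eq_square algebra_simps)

lemma sqrt_bound:
  fixes x y r :: real
  assumes "x \<ge> 0" "y \<ge> 0" "r \<ge> 0" "x^2 \<le> r * y^2"
  shows "x \<le> sqrt r * y"
proof -
  have "x = sqrt (x^2)" using assms(1) by simp
  also have "\<dots> \<le> sqrt (r * y^2)" using assms(4) by (rule real_sqrt_le_mono)
  also have "\<dots> = sqrt r * y" using assms(2) by (simp add: real_sqrt_mult)
  finally show ?thesis .
qed

lemma step0:
  assumes K: "compact K" and g: "g > 0" and Kg: "\<forall>w\<in>K. \<bar>Re w\<bar> \<ge> g" and \<delta>: "\<delta> > 0"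
  shows "\<exists>q. \<forall>w\<in>K. (Re w \<ge> g \<longrightarrow> norm (poly q w - 1) \<le> \<delta>) \<and> (Re w \<le> -g \<longrightarrow> norm (poly q w) \<le> \<delta>)"
proof -
  obtain B0 where B0: "\<forall>w\<in>K. norm w \<le> B0" using compact_bound[OF K] by blast
  define B where "B = max B0 g"
  have B: "\<forall>w\<in>K. norm w \<le> B" "B \<ge> g" using B0 by (auto simp: B_def intro: order_trans)
  have Bp: "(B + 1)^2 > 0" using B g by (simp add: add_pos_pos)
  have g4: "4 * g \<le> (B + 1)^2"
  proof -
    have "0 \<le> (B - 1)^2" by simp
    then have "4 * B \<le> (B + 1)^2" by (simp add: power2_eq_square algebra_simps)
    then show ?thesis using B by linarith
  qed
  define r where "r = 1 - 4 * g / (B + 1)^2"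
  have r: "0 \<le> r" "r < 1" using g4 Bp g by (auto simp: r_def field_simps)
  define \<rho> where "\<rho> = sqrt r"
  have \<rho>: "0 \<le> \<rho>" "\<rho> < 1" using r by (auto simp: \<rho>_def)
  obtain n where n: "\<rho> ^ n < min (1/2) (\<delta>/4)" using real_arch_pow_inv[of "min (1/2) (\<delta>/4)" \<rho>] \<rho> \<delta> by auto
  have n0: "n > 0" using n by (cases n) auto
  have \<rho>n: "\<rho> ^ n \<le> 1/2" "2 * \<rho> ^ n < \<delta> / 2" using n by auto
  define f where "f = (\<lambda>w. (1 + w)^n * (1 / poly (Dp n) w))"
  have "PA K f" unfolding f_def
    by (intro PA_mult PA_power PA_add PA_const PA_id PA_invDp[OF K n0 g Kg] K)
  then obtain q where q: "\<forall>w\<in>K. norm (f w - poly q w) < \<delta>/2"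
    unfolding PA_def using \<delta> by (meson half_gt_zero)
  have sq: "r * norm u^2 \<ge> norm u ^2 - 4 * g" if "norm u \<le> B + 1" for u :: complex
  proof -
    have "norm u^2 \<le> (B + 1)^2" using that by (intro power_mono) auto
    then have "norm u^2 * (4 * g / (B + 1)^2) \<le> 4 * g"
      using Bp g by (simp add: field_simps)
    then show ?thesis by (simp add: r_def algebra_simps)
  qed
  have fw: "f w = (1 + w)^n / ((1 + w)^n + (w - 1)^n)" for w
    by (simp add: f_def poly_Dp)
  have right: "norm (f w - 1) \<le> \<delta>/2" if w: "w \<in> K" "Re w \<ge> g" for w
  proof -
    let ?a = "1 + w" and ?b = "w - 1"
    have na: "norm ?a \<le> B + 1" using B w norm_triangle_ineq[of 1 w] by auto
    have "norm ?b^2 \<le> r * norm ?a^2" using norm_sq_shift[of w] sq[OF na] w by linarith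
    then have nb: "norm ?b \<le> \<rho> * norm ?a" unfolding \<rho>_def using r by (intro sqrt_bound) auto
    have a0: "?a \<noteq> 0" using w g by (auto simp: complex_eq_iff)
    have D0: "?a^n + ?b^n \<noteq> 0" using Dp_root[OF n0, of w] w g by (auto simp: poly_Dp)
    have "f w - 1 = - (?b^n / (?a^n + ?b^n))" using D0 by (simp add: fw field_simps)
    then have "norm (f w - 1) = norm (?b^n / (?a^n + ?b^n))" by simp
    also have "\<dots> \<le> 2 * \<rho> ^ n" using ratio_bound[OF \<rho>(1) \<rho>n(1) nb a0] .
    finally show ?thesis using \<rho>n by linarith
  qed
  have left: "norm (f w) \<le> \<delta>/2" if w: "w \<in> K" "Re w \<le> -g" for w
  proof -
    let ?a = "1 + w" and ?b = "w - 1"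
    have nb: "norm ?b \<le> B + 1" using B w norm_triangle_ineq4[of w 1] by auto
    have "norm ?a^2 \<le> r * norm ?b^2" using norm_sq_shift[of w] sq[OF nb] w by linarith
    then have na: "norm ?a \<le> \<rho> * norm ?b" unfolding \<rho>_def using r by (intro sqrt_bound) auto
    have b0: "?b \<noteq> 0" using w g by (auto simp: complex_eq_iff)
    have "f w = ?a^n / (?b^n + ?a^n)" by (simp add: fw add.commute)
    then have "norm (f w) = norm (?a^n / (?b^n + ?a^n))" by simp
    also have "\<dots> \<le> 2 * \<rho> ^ n" using ratio_bound[OF \<rho>(1) \<rho>n(1) na b0] .
    finally show ?thesis using \<rho>n by linarith
  qed
  show ?thesis
  proof (intro exI ballI conjI impI)
    fix w assume w: "w \<in> K"
    have qw: "norm (f w - poly q w) < \<delta>/2" using q w by blast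
    {
      assume "Re w \<ge> g"
      have "norm (poly q w - 1) \<le> norm (f w - 1) + norm (f w - poly q w)"
        using norm_triangle_ineq[of "f w - 1" "poly q w - f w"] by (simp add: norm_minus_commute)
      then show "norm (poly q w - 1) \<le> \<delta>" using right[OF w \<open>Re w \<ge> g\<close>] qw by linarith
    next
      assume "Re w \<le> -g"
      have "norm (poly q w) \<le> norm (f w) + norm (f w - poly q w)"
        using norm_triangle_ineq[of "f w" "poly q w - f w"] by (simp add: norm_minus_commute)
      then show "norm (poly q w) \<le> \<delta>" using left[OF w \<open>Re w \<le> -g\<close>] qw by linarith
    }
  qed
qed

lemma step:
  assumes K: "compact K" and g: "g > 0" and Kg: "\<forall>w\<in>K. \<bar>Re (e * w) - c\<bar> \<ge> g" and \<delta>: "\<delta> > 0"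
  shows "\<exists>q. \<forall>w\<in>K. (Re (e * w) \<ge> c + g \<longrightarrow> norm (poly q w - 1) \<le> \<delta>) \<and>
                    (Re (e * w) \<le> c - g \<longrightarrow> norm (poly q w) \<le> \<delta>)"
proof -
  let ?h = "\<lambda>w. e * w - of_real c"
  have K': "compact (?h ` K)" by (intro compact_continuous_image continuous_intros K)
  have "\<forall>u\<in>?h ` K. \<bar>Re u\<bar> \<ge> g" using Kg by auto
  then obtain q0 where q0: "\<forall>u\<in>?h ` K. (Re u \<ge> g \<longrightarrow> norm (poly q0 u - 1) \<le> \<delta>) \<and> (Re u \<le> -g \<longrightarrow> norm (poly q0 u) \<le> \<delta>)"
    using step0[OF K' g _ \<delta>] by blast
  have pc: "poly (pcompose q0 [:- of_real c, e:]) w = poly q0 (?h w)" for w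
    by (simp add: poly_pcompose algebra_simps)
  show ?thesis
  proof (intro exI[of _ "pcompose q0 [:- of_real c, e:]"] ballI conjI impI)
    fix w assume w: "w \<in> K"
    then have hw: "?h w \<in> ?h ` K" by blast
    have A: "(Re (?h w) \<ge> g \<longrightarrow> norm (poly q0 (?h w) - 1) \<le> \<delta>) \<and> (Re (?h w) \<le> -g \<longrightarrow> norm (poly q0 (?h w)) \<le> \<delta>)"
      using q0 hw by blast
    have Rh: "Re (?h w) = Re (e * w) - c" by simp
    show "norm (poly (pcompose q0 [:- of_real c, e:]) w - 1) \<le> \<delta>" if "Re (e * w) \<ge> c + g"
    proof -
      have "Re (?h w) \<ge> g" using that Rh by linarith
      then show ?thesis unfolding pc using A by blast
    qed
    show "norm (poly (pcompose q0 [:- of_real c, e:]) w) \<le> \<delta>" if "Re (e * w) \<le> c - g"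
    proof -
      have "Re (?h w) \<le> -g" using that Rh by linarith
      then show ?thesis unfolding pc using A by blast
    qed
  qed
qed

lemma prod4_le:
  fixes a b c d t M :: real
  assumes "0 \<le> a" "a \<le> t" "0 \<le> b" "b \<le> M" "0 \<le> c" "c \<le> M" "0 \<le> d" "d \<le> M"
  shows "a * b * c * d \<le> t * M * M * M"
  using assms by (intro mult_mono) (auto intro: mult_nonneg_nonneg order_trans)

lemma rect:
  assumes K: "compact K" and g: "g > 0" and \<delta>: "\<delta> > 0"
    and Kg: "\<forall>w\<in>K. \<bar>Re w - c1\<bar> \<ge> g \<and> \<bar>Re w - c2\<bar> \<ge> g \<and> \<bar>Im w - d1\<bar> \<ge> g \<and> \<bar>Im w - d2\<bar> \<ge> g"
  shows "\<exists>q. \<forall>w\<in>K. norm (poly q w) \<le> 2 \<and>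
            ((c1 < Re w \<and> Re w < c2 \<and> d1 < Im w \<and> Im w < d2) \<longrightarrow> norm (poly q w) \<ge> 1/2) \<and>
            (\<not> (c1 < Re w \<and> Re w < c2 \<and> d1 < Im w \<and> Im w < d2) \<longrightarrow> norm (poly q w) \<le> \<delta>)"
proof -
  define \<epsilon> where "\<epsilon> = min (\<delta>/2) (1/8)"
  have \<epsilon>: "\<epsilon> > 0" "\<epsilon> \<le> \<delta>/2" "\<epsilon> \<le> 1/8" using \<delta> by (auto simp: \<epsilon>_def)
  have h1: "\<forall>w\<in>K. \<bar>Re (1 * w) - c1\<bar> \<ge> g" using Kg by simp
  have h2: "\<forall>w\<in>K. \<bar>Re (-1 * w) - (-c2)\<bar> \<ge> g"
  proof
    fix w assume "w \<in> K"
    then have "\<bar>Re w - c2\<bar> \<ge> g" using Kg by blast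
    then show "\<bar>Re (-1 * w) - (-c2)\<bar> \<ge> g" by simp
  qed
  have h3: "\<forall>w\<in>K. \<bar>Re (-\<i> * w) - d1\<bar> \<ge> g" using Kg by simp
  have h4: "\<forall>w\<in>K. \<bar>Re (\<i> * w) - (-d2)\<bar> \<ge> g"
  proof
    fix w assume "w \<in> K"
    then have "\<bar>Im w - d2\<bar> \<ge> g" using Kg by blast
    then show "\<bar>Re (\<i> * w) - (-d2)\<bar> \<ge> g" by simp
  qed
  obtain q1 where q1: "\<forall>w\<in>K. (Re (1 * w) \<ge> c1 + g \<longrightarrow> norm (poly q1 w - 1) \<le> \<epsilon>) \<and> (Re (1 * w) \<le> c1 - g \<longrightarrow> norm (poly q1 w) \<le> \<epsilon>)"
    using step[OF K g h1 \<epsilon>(1)] by blast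
  obtain q2 where q2: "\<forall>w\<in>K. (Re (-1 * w) \<ge> -c2 + g \<longrightarrow> norm (poly q2 w - 1) \<le> \<epsilon>) \<and> (Re (-1 * w) \<le> -c2 - g \<longrightarrow> norm (poly q2 w) \<le> \<epsilon>)"
    using step[OF K g h2 \<epsilon>(1)] by blast
  obtain q3 where q3: "\<forall>w\<in>K. (Re (-\<i> * w) \<ge> d1 + g \<longrightarrow> norm (poly q3 w - 1) \<le> \<epsilon>) \<and> (Re (-\<i> * w) \<le> d1 - g \<longrightarrow> norm (poly q3 w) \<le> \<epsilon>)"
    using step[OF K g h3 \<epsilon>(1)] by blast
  obtain q4 where q4: "\<forall>w\<in>K. (Re (\<i> * w) \<ge> -d2 + g \<longrightarrow> norm (poly q4 w - 1) \<le> \<epsilon>) \<and> (Re (\<i> * w) \<le> -d2 - g \<longrightarrow> norm (poly q4 w) \<le> \<epsilon>)"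
    using step[OF K g h4 \<epsilon>(1)] by blast
  have up: "norm x \<le> 9/8" if "norm (x - 1) \<le> \<epsilon> \<or> norm x \<le> \<epsilon>" for x :: complex
  proof -
    have "norm x \<le> norm (x - 1) + 1" using norm_triangle_ineq[of "x - 1" 1] by simp
    then show ?thesis using that \<epsilon> by auto
  qed
  have lo: "norm x \<ge> 7/8" if "norm (x - 1) \<le> \<epsilon>" for x :: complex
  proof -
    have "1 \<le> norm (x - 1) + norm x" using norm_triangle_ineq[of "1 - x" x] by (simp add: norm_minus_commute)
    then show ?thesis using that \<epsilon> by auto
  qed
  show ?thesis
  proof (intro exI[of _ "q1 * q2 * q3 * q4"] ballI conjI impI)
    fix w assume w: "w \<in> K"
    let ?x1 = "poly q1 w" and ?x2 = "poly q2 w" and ?x3 = "poly q3 w" and ?x4 = "poly q4 w"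
    have r1: "Re w \<ge> c1 + g \<or> Re w \<le> c1 - g" and r2: "Re w \<ge> c2 + g \<or> Re w \<le> c2 - g"
      and i1: "Im w \<ge> d1 + g \<or> Im w \<le> d1 - g" and i2: "Im w \<ge> d2 + g \<or> Im w \<le> d2 - g"
    proof -
      have "\<bar>Re w - c1\<bar> \<ge> g \<and> \<bar>Re w - c2\<bar> \<ge> g \<and> \<bar>Im w - d1\<bar> \<ge> g \<and> \<bar>Im w - d2\<bar> \<ge> g"
        using Kg w by blast
      then show "Re w \<ge> c1 + g \<or> Re w \<le> c1 - g" "Re w \<ge> c2 + g \<or> Re w \<le> c2 - g"
        "Im w \<ge> d1 + g \<or> Im w \<le> d1 - g" "Im w \<ge> d2 + g \<or> Im w \<le> d2 - g" by arith+
    qed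
    have x1: "Re w \<ge> c1 + g \<Longrightarrow> norm (?x1 - 1) \<le> \<epsilon>" "Re w \<le> c1 - g \<Longrightarrow> norm ?x1 \<le> \<epsilon>" using q1 w by auto
    have x2: "Re w \<le> c2 - g \<Longrightarrow> norm (?x2 - 1) \<le> \<epsilon>" "Re w \<ge> c2 + g \<Longrightarrow> norm ?x2 \<le> \<epsilon>" using q2 w by auto
    have x3: "Im w \<ge> d1 + g \<Longrightarrow> norm (?x3 - 1) \<le> \<epsilon>" "Im w \<le> d1 - g \<Longrightarrow> norm ?x3 \<le> \<epsilon>" using q3 w by auto
    have x4: "Im w \<le> d2 - g \<Longrightarrow> norm (?x4 - 1) \<le> \<epsilon>" "Im w \<ge> d2 + g \<Longrightarrow> norm ?x4 \<le> \<epsilon>" using q4 w by auto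
    have u1: "norm ?x1 \<le> 9/8" using r1 x1 up by blast
    have u2: "norm ?x2 \<le> 9/8" using r2 x2 up by blast
    have u3: "norm ?x3 \<le> 9/8" using i1 x3 up by blast
    have u4: "norm ?x4 \<le> 9/8" using i2 x4 up by blast
    have nm: "norm (poly (q1 * q2 * q3 * q4) w) = norm ?x1 * norm ?x2 * norm ?x3 * norm ?x4"
      by (simp add: norm_mult)
    have "norm ?x1 * norm ?x2 * norm ?x3 * norm ?x4 \<le> (9/8) * (9/8) * (9/8) * (9/8)"
      using u1 u2 u3 u4 by (intro mult_mono) (auto intro: mult_nonneg_nonneg)
    then show "norm (poly (q1 * q2 * q3 * q4) w) \<le> 2" unfolding nm by simp
    show "norm (poly (q1 * q2 * q3 * q4) w) \<ge> 1/2"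
      if "c1 < Re w \<and> Re w < c2 \<and> d1 < Im w \<and> Im w < d2"
    proof -
      have "Re w \<ge> c1 + g" "Re w \<le> c2 - g" "Im w \<ge> d1 + g" "Im w \<le> d2 - g"
        using that r1 r2 i1 i2 g by linarith+
      then have "norm ?x1 \<ge> 7/8" "norm ?x2 \<ge> 7/8" "norm ?x3 \<ge> 7/8" "norm ?x4 \<ge> 7/8"
        using x1(1) x2(1) x3(1) x4(1) lo by blast+
      then have "(7/8) * (7/8) * (7/8) * (7/8) \<le> norm ?x1 * norm ?x2 * norm ?x3 * norm ?x4"
        by (intro mult_mono) (auto intro: mult_nonneg_nonneg)
      then show ?thesis unfolding nm by simp
    qed
    show "norm (poly (q1 * q2 * q3 * q4) w) \<le> \<delta>"
      if "\<not> (c1 < Re w \<and> Re w < c2 \<and> d1 < Im w \<and> Im w < d2)"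
    proof -
      have small: "norm ?x1 \<le> \<epsilon> \<or> norm ?x2 \<le> \<epsilon> \<or> norm ?x3 \<le> \<epsilon> \<or> norm ?x4 \<le> \<epsilon>"
      proof -
        have "Re w \<le> c1 - g \<or> Re w \<ge> c2 + g \<or> Im w \<le> d1 - g \<or> Im w \<ge> d2 + g"
          using that r1 r2 i1 i2 g by linarith
        then show ?thesis using x1(2) x2(2) x3(2) x4(2) by blast
      qed
      have "norm ?x1 * norm ?x2 * norm ?x3 * norm ?x4 \<le> \<epsilon> * (9/8) * (9/8) * (9/8)"
        using small
      proof (elim disjE)
        assume "norm ?x1 \<le> \<epsilon>"
        then show ?thesis using prod4_le[of "norm ?x1" \<epsilon> "norm ?x2" "9/8" "norm ?x3" "norm ?x4"] u2 u3 u4 by simp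
      next
        assume "norm ?x2 \<le> \<epsilon>"
        then show ?thesis using prod4_le[of "norm ?x2" \<epsilon> "norm ?x1" "9/8" "norm ?x3" "norm ?x4"] u1 u3 u4 by (simp add: mult_ac)
      next
        assume "norm ?x3 \<le> \<epsilon>"
        then show ?thesis using prod4_le[of "norm ?x3" \<epsilon> "norm ?x1" "9/8" "norm ?x2" "norm ?x4"] u1 u2 u4 by (simp add: mult_ac)
      next
        assume "norm ?x4 \<le> \<epsilon>"
        then show ?thesis using prod4_le[of "norm ?x4" \<epsilon> "norm ?x1" "9/8" "norm ?x2" "norm ?x3"] u1 u2 u3 by (simp add: mult_ac)
      qed
      also have "\<dots> \<le> \<delta>" using \<epsilon> by simp
      finally show ?thesis unfolding nm .
    qed
  qed
qed

lemma cpoly_lift: "cpoly (\<lambda>z::complex^'n. poly q (z $ k))"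
proof (induction q)
  case 0
  then show ?case using cpoly_const[of 0] by simp
next
  case (pCons a p)
  have "cpoly (\<lambda>z::complex^'n. a + z $ k * poly p (z $ k))"
    by (intro cpoly_add cpoly_mult cpoly_const cpoly_coord pCons)
  then show ?case by simp
qed

lemma cpoly_prod: "finite I \<Longrightarrow> (\<And>i. i \<in> I \<Longrightarrow> cpoly (f i)) \<Longrightarrow> cpoly (\<lambda>z. \<Prod>i\<in>I. f i z)"
  by (induction I rule: finite_induct) (auto intro: cpoly_const cpoly_mult)

lemma norm_vec_le_sum: "norm (x :: complex^'n) \<le> (\<Sum>i\<in>UNIV. norm (x $ i))"
  unfolding norm_vec_def by (rule L2_set_le_sum) simp

lemma coord_close:
  fixes u z :: "complex^'n"
  assumes "\<forall>k. \<bar>Re (u$k) - Re (z$k)\<bar> < \<eta> \<and> \<bar>Im (u$k) - Im (z$k)\<bar> < \<eta>"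
  shows "dist u z < 2 * real CARD('n) * \<eta>"
proof -
  have "dist u z = norm (u - z)" by (simp add: dist_norm)
  also have "\<dots> \<le> (\<Sum>k\<in>UNIV. norm ((u - z) $ k))" by (rule norm_vec_le_sum)
  also have "\<dots> < (\<Sum>k\<in>(UNIV::'n set). 2 * \<eta>)"
  proof (rule sum_strict_mono)
    fix k :: 'n
    have "norm ((u - z) $ k) \<le> \<bar>Re ((u - z) $ k)\<bar> + \<bar>Im ((u - z) $ k)\<bar>" by (rule cmod_le)
    then show "norm ((u - z) $ k) < 2 * \<eta>" using assms[rule_format, of k] by simp
  qed auto
  also have "\<dots> = 2 * real CARD('n) * \<eta>" by simp
  finally show ?thesis .
qed

definition gapok :: "'a set \<Rightarrow> ('a \<Rightarrow> real) \<Rightarrow> bool" where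
  "gapok E f \<longleftrightarrow> (\<forall>x \<eta>. \<eta> > 0 \<longrightarrow>
      (\<exists>c g. x - \<eta> < c \<and> c < x \<and> 0 < g \<and> (\<forall>u\<in>E. g \<le> \<bar>f u - c\<bar>)) \<and>
      (\<exists>c g. x < c \<and> c < x + \<eta> \<and> 0 < g \<and> (\<forall>u\<in>E. g \<le> \<bar>f u - c\<bar>)))"

lemma coord_peak:
  fixes E :: "(complex^'n) set"
  assumes E: "compact E" and \<eta>: "\<eta> > 0" and \<delta>: "\<delta> > 0"
    and Hr: "gapok E (\<lambda>u. Re (u$k))" and Hi: "gapok E (\<lambda>u. Im (u$k))"
  shows "\<exists>q. norm (poly q (z$k)) \<ge> 1/2 \<and> (\<forall>u\<in>E. norm (poly q (u$k)) \<le> 2) \<and>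
     (\<forall>u\<in>E. (\<bar>Re (u$k) - Re (z$k)\<bar> \<ge> \<eta> \<or> \<bar>Im (u$k) - Im (z$k)\<bar> \<ge> \<eta>) \<longrightarrow> norm (poly q (u$k)) \<le> \<delta>)"
proof -
  define x where "x = Re (z$k)"
  define y where "y = Im (z$k)"
  obtain c1 g1 where c1: "x - \<eta> < c1" "c1 < x" "0 < g1" "\<forall>u\<in>E. g1 \<le> \<bar>Re (u$k) - c1\<bar>"
    using Hr \<eta> unfolding gapok_def by blast
  obtain c2 g2 where c2: "x < c2" "c2 < x + \<eta>" "0 < g2" "\<forall>u\<in>E. g2 \<le> \<bar>Re (u$k) - c2\<bar>"
    using Hr \<eta> unfolding gapok_def by blast
  obtain d1 g3 where d1: "y - \<eta> < d1" "d1 < y" "0 < g3" "\<forall>u\<in>E. g3 \<le> \<bar>Im (u$k) - d1\<bar>"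
    using Hi \<eta> unfolding gapok_def by blast
  obtain d2 g4 where d2: "y < d2" "d2 < y + \<eta>" "0 < g4" "\<forall>u\<in>E. g4 \<le> \<bar>Im (u$k) - d2\<bar>"
    using Hi \<eta> unfolding gapok_def by blast
  define g where "g = min (min (min g1 g2) (min g3 g4)) (min (min (x - c1) (c2 - x)) (min (y - d1) (d2 - y)))"
  have g: "g > 0" using c1 c2 d1 d2 by (simp add: g_def)
  have gle: "g \<le> g1" "g \<le> g2" "g \<le> g3" "g \<le> g4" "g \<le> x - c1" "g \<le> c2 - x" "g \<le> y - d1" "g \<le> d2 - y"
    by (simp_all add: g_def)
  define K where "K = (\<lambda>u. u$k) ` E \<union> {z$k}"
  have K: "compact K" unfolding K_def
    by (intro compact_Un compact_continuous_image continuous_intros E) auto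
  have Kg: "\<forall>w\<in>K. \<bar>Re w - c1\<bar> \<ge> g \<and> \<bar>Re w - c2\<bar> \<ge> g \<and> \<bar>Im w - d1\<bar> \<ge> g \<and> \<bar>Im w - d2\<bar> \<ge> g"
  proof
    fix w assume "w \<in> K"
    then consider (E) u where "u \<in> E" "w = u$k" | (z) "w = z$k" unfolding K_def by blast
    then show "\<bar>Re w - c1\<bar> \<ge> g \<and> \<bar>Re w - c2\<bar> \<ge> g \<and> \<bar>Im w - d1\<bar> \<ge> g \<and> \<bar>Im w - d2\<bar> \<ge> g"
    proof cases
      case E
      then show ?thesis using c1(4) c2(4) d1(4) d2(4) gle by fastforce
    next
      case z
      then show ?thesis using gle c1 c2 d1 d2 by (simp add: x_def[symmetric] y_def[symmetric])
    qed
  qed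
  obtain q where q: "\<forall>w\<in>K. norm (poly q w) \<le> 2 \<and>
            ((c1 < Re w \<and> Re w < c2 \<and> d1 < Im w \<and> Im w < d2) \<longrightarrow> norm (poly q w) \<ge> 1/2) \<and>
            (\<not> (c1 < Re w \<and> Re w < c2 \<and> d1 < Im w \<and> Im w < d2) \<longrightarrow> norm (poly q w) \<le> \<delta>)"
    using rect[OF K g \<delta> Kg] by blast
  have zK: "z$k \<in> K" and uK: "\<And>u. u \<in> E \<Longrightarrow> u$k \<in> K" unfolding K_def by auto
  show ?thesis
  proof (intro exI conjI ballI impI)
    show "norm (poly q (z$k)) \<ge> 1/2" using q zK c1 c2 d1 d2 by (simp add: x_def y_def)
    fix u assume u: "u \<in> E"
    show "norm (poly q (u$k)) \<le> 2" using q uK[OF u] by blast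
    assume far: "\<bar>Re (u$k) - Re (z$k)\<bar> \<ge> \<eta> \<or> \<bar>Im (u$k) - Im (z$k)\<bar> \<ge> \<eta>"
    have "\<not> (c1 < Re (u$k) \<and> Re (u$k) < c2 \<and> d1 < Im (u$k) \<and> Im (u$k) < d2)"
      using far c1 c2 d1 d2 unfolding x_def y_def by arith
    then show "norm (poly q (u$k)) \<le> \<delta>" using q uK[OF u] by blast
  qed
qed

lemma separate:
  fixes E :: "(complex^'n) set"
  assumes E: "compact E" "E \<noteq> {}" and z: "z \<notin> E"
    and H: "\<And>k. gapok E (\<lambda>u. Re (u$k)) \<and> gapok E (\<lambda>u. Im (u$k))"
  shows "\<exists>P. cpoly P \<and> (\<forall>u\<in>E. norm (P u) < norm (P z))"
proof -
  define N where "N = CARD('n)"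
  have N: "N > 0" by (simp add: N_def)
  define r where "r = infdist z E"
  have r: "r > 0" unfolding r_def using E z by (intro infdist_pos_not_in_closed) (auto intro: compact_imp_closed)
  define \<eta> where "\<eta> = r / (2 * real N)"
  have \<eta>: "\<eta> > 0" using r N by (simp add: \<eta>_def)
  define \<delta> :: real where "\<delta> = (1/4) ^ N / 2"
  have \<delta>: "\<delta> > 0" by (simp add: \<delta>_def)
  have "\<forall>k. \<exists>q. norm (poly q (z$k)) \<ge> 1/2 \<and> (\<forall>u\<in>E. norm (poly q (u$k)) \<le> 2) \<and>
     (\<forall>u\<in>E. (\<bar>Re (u$k) - Re (z$k)\<bar> \<ge> \<eta> \<or> \<bar>Im (u$k) - Im (z$k)\<bar> \<ge> \<eta>) \<longrightarrow> norm (poly q (u$k)) \<le> \<delta>)"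
    using coord_peak[OF E(1) \<eta> \<delta>] H by blast
  then obtain Q where Q: "\<And>k. norm (poly (Q k) (z$k)) \<ge> 1/2" "\<And>k u. u \<in> E \<Longrightarrow> norm (poly (Q k) (u$k)) \<le> 2"
    "\<And>k u. u \<in> E \<Longrightarrow> (\<bar>Re (u$k) - Re (z$k)\<bar> \<ge> \<eta> \<or> \<bar>Im (u$k) - Im (z$k)\<bar> \<ge> \<eta>) \<Longrightarrow> norm (poly (Q k) (u$k)) \<le> \<delta>"
    by metis
  define P where "P = (\<lambda>u::complex^'n. \<Prod>k\<in>UNIV. poly (Q k) (u$k))"
  have "cpoly P" unfolding P_def by (intro cpoly_prod cpoly_lift) auto
  moreover have "norm (P u) < norm (P z)" if u: "u \<in> E" for u
  proof -
    have "(1/2) ^ N = (\<Prod>k\<in>(UNIV::'n set). 1/2)" by (simp add: N_def)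
    also have "\<dots> \<le> (\<Prod>k\<in>UNIV. norm (poly (Q k) (z$k)))" by (intro prod_mono) (use Q(1) in force)
    also have "\<dots> = norm (P z)" by (simp add: P_def prod_norm)
    finally have Pz: "(1/2) ^ N \<le> norm (P z)" .
    obtain k0 where k0: "\<bar>Re (u$k0) - Re (z$k0)\<bar> \<ge> \<eta> \<or> \<bar>Im (u$k0) - Im (z$k0)\<bar> \<ge> \<eta>"
    proof (rule ccontr)
      assume "\<not> thesis"
      then have "\<forall>k. \<bar>Re (u$k) - Re (z$k)\<bar> < \<eta> \<and> \<bar>Im (u$k) - Im (z$k)\<bar> < \<eta>"
        using that by (meson not_le)
      then have "dist u z < 2 * real CARD('n) * \<eta>" by (rule coord_close)
      also have "\<dots> = r" using N by (simp add: \<eta>_def N_def)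
      also have "r \<le> dist z u" unfolding r_def using u by (rule infdist_le)
      finally show False by (simp add: dist_commute)
    qed
    have "norm (P u) = (\<Prod>k\<in>UNIV. norm (poly (Q k) (u$k)))" by (simp add: P_def prod_norm)
    also have "\<dots> = norm (poly (Q k0) (u$k0)) * (\<Prod>k\<in>UNIV - {k0}. norm (poly (Q k) (u$k)))"
      by (simp add: prod.remove)
    also have "\<dots> \<le> \<delta> * (\<Prod>k\<in>UNIV - {k0}. 2)"
      using Q(2)[OF u] Q(3)[OF u k0] \<delta> by (intro mult_mono prod_mono) (auto intro: prod_nonneg)
    also have "(\<Prod>k\<in>UNIV - {k0}. (2::real)) \<le> 2 ^ N"
      by (simp add: N_def card_Diff_subset)
    then have "\<delta> * (\<Prod>k\<in>UNIV - {k0}. (2::real)) \<le> \<delta> * 2 ^ N" using \<delta> by simp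
    also have "\<delta> * 2 ^ N = (1/2) ^ N / 2" by (simp add: \<delta>_def power_mult_distrib[symmetric])
    also have "\<dots> < (1/2) ^ N" by simp
    finally show ?thesis using Pz by linarith
  qed
  ultimately show ?thesis by blast
qed

definition qe :: "nat \<Rightarrow> real" where "qe = from_nat_into \<rat>"

lemma qe_range: "range qe = \<rat>"
  unfolding qe_def by (rule range_from_nat_into) (auto intro: countable_rat)

definition rr :: "real \<Rightarrow> nat \<Rightarrow> real" where
  "rr \<eta> n = (if qe n = 0 then 0 else min (\<bar>qe n\<bar> / 2) (\<eta> / 2 ^ Suc n))"

definition Gap :: "real \<Rightarrow> real \<Rightarrow> real set" where
  "Gap \<eta> a = (\<Union>n. ball (a + qe n) (rr \<eta> n))"

lemma open_Gap: "open (Gap \<eta> a)" unfolding Gap_def by auto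

lemma not_in_Gap: "a \<notin> Gap \<eta> a"
proof
  assume "a \<in> Gap \<eta> a"
  then obtain n where "dist (a + qe n) a < rr \<eta> n" unfolding Gap_def by auto
  moreover have "rr \<eta> n \<le> \<bar>qe n\<bar> / 2" unfolding rr_def using min.cobounded1 by (cases "qe n = 0") auto
  ultimately have "\<bar>qe n\<bar> < \<bar>qe n\<bar> / 2" by (simp add: dist_real_def)
  then show False by simp
qed

lemma rr_nonneg: "\<eta> > 0 \<Longrightarrow> rr \<eta> n \<ge> 0" by (simp add: rr_def)
lemma rr_le: "\<eta> > 0 \<Longrightarrow> rr \<eta> n \<le> \<eta> / 2 ^ Suc n" by (simp add: rr_def)
lemma rr_pos: "\<eta> > 0 \<Longrightarrow> qe n \<noteq> 0 \<Longrightarrow> rr \<eta> n > 0" by (simp add: rr_def)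

lemma rat_nonzero_between: "lo < (hi::real) \<Longrightarrow> \<exists>q\<in>\<rat>. lo < q \<and> q < hi \<and> q \<noteq> 0"
proof -
  assume lh: "lo < hi"
  obtain q1 where q1: "q1 \<in> \<rat>" "lo < q1" "q1 < hi" using Rats_dense_in_real[OF lh] by blast
  show ?thesis
  proof (cases "q1 = 0")
    case True
    obtain q2 where q2: "q2 \<in> \<rat>" "lo < q2" "q2 < q1" using Rats_dense_in_real[OF q1(2)] by blast
    then show ?thesis using True q1 by (intro bexI[of _ q2]) auto
  next
    case False then show ?thesis using q1 by blast
  qed
qed

lemma Gap_point:
  assumes "\<eta> > 0" "lo < hi"
  shows "\<exists>c g. lo < c \<and> c < hi \<and> g > 0 \<and> ball c g \<subseteq> Gap \<eta> a"
proof -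
  obtain q where q: "q \<in> \<rat>" "lo - a < q" "q < hi - a" "q \<noteq> 0"
    using rat_nonzero_between[of "lo - a" "hi - a"] assms by auto
  obtain n where n: "qe n = q" using q(1) qe_range by (metis rangeE)
  show ?thesis
    using n q assms rr_pos[OF assms(1), of n]
    by (intro exI[of _ "a + q"] exI[of _ "rr \<eta> n"]) (auto simp: Gap_def)
qed

lemma gapok_Gap:
  assumes "\<eta> > 0" "\<forall>u\<in>E. f u \<notin> Gap \<eta> a"
  shows "gapok E f"
  unfolding gapok_def
proof (intro allI impI conjI)
  fix x e :: real assume e: "e > 0"
  show "\<exists>c g. x - e < c \<and> c < x \<and> 0 < g \<and> (\<forall>u\<in>E. g \<le> \<bar>f u - c\<bar>)"
  proof -
    obtain c g where cg: "x - e < c" "c < x" "g > 0" "ball c g \<subseteq> Gap \<eta> a"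
      using Gap_point[OF assms(1), of "x - e" x a] e by auto
    have "g \<le> \<bar>f u - c\<bar>" if "u \<in> E" for u
    proof (rule ccontr)
      assume "\<not> g \<le> \<bar>f u - c\<bar>"
      then have "f u \<in> ball c g" by (simp add: dist_real_def)
      then show False using cg(4) assms(2) that by blast
    qed
    then show ?thesis using cg by blast
  qed
  show "\<exists>c g. x < c \<and> c < x + e \<and> 0 < g \<and> (\<forall>u\<in>E. g \<le> \<bar>f u - c\<bar>)"
  proof -
    obtain c g where cg: "x < c" "c < x + e" "g > 0" "ball c g \<subseteq> Gap \<eta> a"
      using Gap_point[OF assms(1), of x "x + e" a] e by auto
    have "g \<le> \<bar>f u - c\<bar>" if "u \<in> E" for u
    proof (rule ccontr)
      assume "\<not> g \<le> \<bar>f u - c\<bar>"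
      then have "f u \<in> ball c g" by (simp add: dist_real_def)
      then show False using cg(4) assms(2) that by blast
    qed
    then show ?thesis using cg by blast
  qed
qed

lemma connected_avoid_Gap:
  assumes "\<eta> > 0" "connected S" "S \<inter> Gap \<eta> a = {}" "x \<in> S" "y \<in> S"
  shows "x = (y::real)"
proof (rule ccontr)
  assume "x \<noteq> y"
  then consider "x < y" | "y < x" by linarith
  then show False
  proof cases
    case 1
    obtain c g where cg: "x < c" "c < y" "g > 0" "ball c g \<subseteq> Gap \<eta> a" using Gap_point[OF assms(1) 1] by blast
    have "c \<in> S" using connected_contains_Icc[OF assms(2) assms(4) assms(5)] cg by auto
    moreover have "c \<in> Gap \<eta> a" using cg by auto
    ultimately show False using assms(3) by blast
  next
    case 2
    obtain c g where cg: "y < c" "c < x" "g > 0" "ball c g \<subseteq> Gap \<eta> a" using Gap_point[OF assms(1) 2] by blast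
    have "c \<in> S" using connected_contains_Icc[OF assms(2) assms(5) assms(4)] cg by auto
    moreover have "c \<in> Gap \<eta> a" using cg by auto
    ultimately show False using assms(3) by blast
  qed
qed

lemma inner_sum_Basis_fun: "i \<in> Basis \<Longrightarrow> (\<Sum>b\<in>Basis. f b *\<^sub>R b) \<bullet> i = (f i :: real)" for i :: "'a::euclidean_space"
  by (simp add: inner_sum_left inner_Basis if_distrib[of "\<lambda>x. _ * x"] cong: if_cong)

lemma slab_measure:
  fixes Y :: "('a::euclidean_space) set"
  assumes R: "\<forall>u\<in>Y. norm u \<le> R" "R \<ge> 0" and b: "b \<in> Basis" and r: "r \<ge> 0"
  shows "emeasure lebesgue (Y \<inter> {u. u \<bullet> b \<in> ball c r}) \<le> ennreal (2 * r * (2*R)^(DIM('a) - 1))"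
proof -
  define l :: 'a where "l = (\<Sum>b'\<in>Basis. (if b' = b then c - r else -R) *\<^sub>R b')"
  define h :: 'a where "h = (\<Sum>b'\<in>Basis. (if b' = b then c + r else R) *\<^sub>R b')"
  have li: "l \<bullet> b' = (if b' = b then c - r else -R)" if "b' \<in> Basis" for b'
    unfolding l_def using that by (rule inner_sum_Basis_fun)
  have hi: "h \<bullet> b' = (if b' = b then c + r else R)" if "b' \<in> Basis" for b'
    unfolding h_def using that by (rule inner_sum_Basis_fun)
  have sub: "Y \<inter> {u. u \<bullet> b \<in> ball c r} \<subseteq> cbox l h"
  proof
    fix u assume u: "u \<in> Y \<inter> {u. u \<bullet> b \<in> ball c r}"
    show "u \<in> cbox l h" unfolding mem_box
    proof (intro ballI conjI)
      fix b' :: 'a assume b': "b' \<in> Basis"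
      have "\<bar>u \<bullet> b'\<bar> \<le> R" using Basis_le_norm[OF b', of u] R u by force
      moreover have "\<bar>u \<bullet> b - c\<bar> < r" using u by (auto simp: dist_real_def abs_minus_commute)
      ultimately show "l \<bullet> b' \<le> u \<bullet> b'" "u \<bullet> b' \<le> h \<bullet> b'" using li[OF b'] hi[OF b'] by auto
    qed
  qed
  have "emeasure lebesgue (Y \<inter> {u. u \<bullet> b \<in> ball c r}) \<le> emeasure lebesgue (cbox l h)"
    by (rule emeasure_mono[OF sub]) simp
  also have "\<dots> = emeasure lborel (cbox l h)" by simp
  also have "\<dots> = ennreal (\<Prod>b'\<in>Basis. (h - l) \<bullet> b')"
    using li hi R r by (simp add: emeasure_lborel_cbox_eq)
  also have "(\<Prod>b'\<in>Basis. (h - l) \<bullet> b') = (\<Prod>b'\<in>Basis. (if b' = b then 2 * r else 2 * R))"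
    using li hi by (intro prod.cong) (auto simp: inner_diff_left)
  also have "\<dots> = 2 * r * (2 * R) ^ (DIM('a) - 1)"
  proof -
    have "card (Basis \<inter> - {b}) = DIM('a) - 1" using b by (simp add: Diff_eq[symmetric] card_Diff_singleton)
    then show ?thesis using b by (simp add: prod.If_cases Int_absorb1)
  qed
  finally show ?thesis by simp
qed

lemma gap_measure:
  fixes Y :: "('a::euclidean_space) set"
  assumes R: "\<forall>u\<in>Y. norm u \<le> R" "R \<ge> 0" and b: "b \<in> Basis" and \<eta>: "\<eta> > 0"
    and Y: "Y \<in> sets lebesgue"
  shows "emeasure lebesgue (Y \<inter> {u. u \<bullet> b \<in> Gap \<eta> a}) \<le> ennreal (2 * \<eta> * (2*R)^(DIM('a) - 1))"
proof -
  define C where "C = (2*R)^(DIM('a) - 1)"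
  have C: "C \<ge> 0" using R by (simp add: C_def)
  define S where "S = (\<lambda>n. Y \<inter> {u. u \<bullet> b \<in> ball (a + qe n) (rr \<eta> n)})"
  have eq: "Y \<inter> {u. u \<bullet> b \<in> Gap \<eta> a} = (\<Union>n. S n)" by (auto simp: S_def Gap_def)
  have Ss: "range S \<subseteq> sets lebesgue"
  proof safe
    fix n
    have "open {u::'a. u \<bullet> b \<in> ball (a + qe n) (rr \<eta> n)}"
      unfolding vimage_def[symmetric] by (intro continuous_open_vimage continuous_intros) auto
    then have "{u::'a. u \<bullet> b \<in> ball (a + qe n) (rr \<eta> n)} \<in> sets lebesgue"
      by (simp add: borel_open)
    then show "S n \<in> sets lebesgue" using Y unfolding S_def by (rule sets.Int[rotated])
  qed
  have "emeasure lebesgue (Y \<inter> {u. u \<bullet> b \<in> Gap \<eta> a}) \<le> (\<Sum>n. emeasure lebesgue (S n))"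
    unfolding eq by (rule emeasure_subadditive_countably[OF Ss])
  also have "\<dots> \<le> (\<Sum>n. ennreal (2 * C * \<eta> * (1/2)^Suc n))"
  proof (rule suminf_le)
    fix n
    have "emeasure lebesgue (S n) \<le> ennreal (2 * rr \<eta> n * C)"
      unfolding S_def C_def by (rule slab_measure[OF R b rr_nonneg[OF \<eta>]])
    also have "\<dots> \<le> ennreal (2 * C * \<eta> * (1/2)^Suc n)"
    proof (rule ennreal_leI)
      have "rr \<eta> n \<le> \<eta> * (1/2)^Suc n" using rr_le[OF \<eta>, of n] by (simp add: power_one_over field_simps)
      then have "(2 * C) * rr \<eta> n \<le> (2 * C) * (\<eta> * (1/2)^Suc n)" using C by (intro mult_left_mono) auto
      then show "2 * rr \<eta> n * C \<le> 2 * C * \<eta> * (1/2)^Suc n" by (simp add: mult_ac)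
    qed
    finally show "emeasure lebesgue (S n) \<le> ennreal (2 * C * \<eta> * (1/2)^Suc n)" .
  qed auto
  also have "\<dots> = ennreal (2 * C * \<eta> * 1)"
    by (intro suminf_ennreal_eq sums_mult power_half_series) (use C \<eta> in auto)
  finally show ?thesis by (simp add: C_def mult_ac)
qed

lemma zero_nbhd:
  fixes p :: "complex^'n \<Rightarrow> complex"
  assumes p: "cpoly p" "p x0 \<noteq> 0" and e: "e > 0"
  shows "\<exists>W. open W \<and> {z. p z = 0} \<subseteq> W \<and> x0 \<notin> W \<and> emeasure lebesgue W \<le> ennreal e"
proof -
  let ?S = "{z. p z = 0}"
  have N: "?S \<in> null_sets lebesgue" using cpoly_zero_null[OF p] by (rule null_sets_completionI)
  then have Ss: "?S \<in> sets lebesgue" by auto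
  obtain T where T: "open T" "?S \<subseteq> T" "(T - ?S) \<in> lmeasurable" "emeasure lebesgue (T - ?S) < ennreal e"
    using sets_lebesgue_outer_open[OF Ss e] by blast
  have "emeasure lebesgue T \<le> emeasure lebesgue ((T - ?S) \<union> ?S)"
    by (rule emeasure_mono) (use T Ss in \<open>auto simp: fmeasurable_def\<close>)
  also have "\<dots> \<le> emeasure lebesgue (T - ?S) + emeasure lebesgue ?S"
    by (rule emeasure_subadditive) (use T Ss in \<open>auto simp: fmeasurable_def\<close>)
  also have "\<dots> \<le> ennreal e" using T(4) N by auto
  finally have Te: "emeasure lebesgue T \<le> ennreal e" .
  show ?thesis
  proof (intro exI conjI)
    show "open (T - {x0})" using T(1) by auto
    show "?S \<subseteq> T - {x0}" using T(2) p(2) by auto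
    show "x0 \<notin> T - {x0}" by simp
    have "emeasure lebesgue (T - {x0}) \<le> emeasure lebesgue T"
      by (rule emeasure_mono) (use T(1) in auto)
    then show "emeasure lebesgue (T - {x0}) \<le> ennreal e" using Te by simp
  qed
qed

theorem lemma2p5:
  fixes Y :: "(complex ^ 'n) set" and x0 :: "complex ^ 'n" and \<epsilon> :: real
    and P :: "(complex ^ 'n \<Rightarrow> complex) set"
  assumes "compact Y" and "x0 \<in> Y" and "\<epsilon> > 0"
    and "countable P" and "\<forall>p\<in>P. cpoly p" and "\<forall>p\<in>P. p x0 \<noteq> 0"
  shows "\<exists>E. totally_disconnected E \<and> compact E \<and> polynomially_convex E
           \<and> x0 \<in> E \<and> E \<subseteq> Y
           \<and> (\<forall>p\<in>P. \<forall>z\<in>E. p z \<noteq> 0)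
           \<and> emeasure lebesgue (Y - E) < ennreal \<epsilon>"
proof -
  note Yc = assms(1) and x0Y = assms(2) and \<epsilon> = assms(3) and Pc = assms(4) and Pp = assms(5) and Px0 = assms(6)
  obtain R0 where R0: "\<forall>u\<in>Y. norm u \<le> R0" using compact_imp_bounded[OF Yc] bounded_iff by metis
  define R where "R = max R0 0"
  have R: "\<forall>u\<in>Y. norm u \<le> R" "R \<ge> 0" using R0 by (auto simp: R_def intro: order_trans)
  define D where "D = DIM(complex^'n)"
  define C where "C = (2*R)^(D - 1)"
  have C: "C \<ge> 0" using R by (simp add: C_def)
  define \<eta> where "\<eta> = \<epsilon> / (8 * (real D * C + 1))"
  have DC: "real D * C + 1 > 0" using C by (simp add: add_nonneg_pos)
  have \<eta>: "\<eta> > 0" using \<epsilon> DC by (simp add: \<eta>_def)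
  have \<eta>D: "real D * (2 * \<eta> * C) \<le> \<epsilon> / 4"
  proof -
    have "real D * (2 * \<eta> * C) = (\<epsilon> / 4) * (real D * C / (real D * C + 1))"
      using DC by (simp add: \<eta>_def field_simps)
    also have "\<dots> \<le> (\<epsilon> / 4) * 1"
    proof (rule mult_left_mono)
      show "real D * C / (real D * C + 1) \<le> 1" using DC by simp
    qed (use \<epsilon> in auto)
    finally show ?thesis by simp
  qed
  define G where "G = (\<lambda>b. Gap \<eta> (x0 \<bullet> b))"
  define bad1 where "bad1 = (\<Union>b\<in>Basis. {u::complex^'n. u \<bullet> b \<in> G b})"
  have open_slab: "open {u::complex^'n. u \<bullet> b \<in> G b}" for b
    unfolding vimage_def[symmetric] G_def by (intro continuous_open_vimage continuous_intros open_Gap)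
  have bad1_open: "open bad1" unfolding bad1_def using open_slab by auto
  have "\<forall>n. \<exists>W. open W \<and> (P \<noteq> {} \<longrightarrow> {z. from_nat_into P n z = 0} \<subseteq> W) \<and> x0 \<notin> W \<and>
          emeasure lebesgue W \<le> ennreal (\<epsilon> / 4 * (1/2) ^ Suc n)"
  proof
    fix n
    show "\<exists>W. open W \<and> (P \<noteq> {} \<longrightarrow> {z. from_nat_into P n z = 0} \<subseteq> W) \<and> x0 \<notin> W \<and>
          emeasure lebesgue W \<le> ennreal (\<epsilon> / 4 * (1/2) ^ Suc n)"
    proof (cases "P = {}")
      case True
      then show ?thesis by (intro exI[of _ "{}"]) auto
    next
      case False
      then have "from_nat_into P n \<in> P" by (rule from_nat_into)
      then obtain W where "open W" "{z. from_nat_into P n z = 0} \<subseteq> W" "x0 \<notin> W"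
          "emeasure lebesgue W \<le> ennreal (\<epsilon> / 4 * (1/2) ^ Suc n)"
        using zero_nbhd[of "from_nat_into P n" x0 "\<epsilon> / 4 * (1/2) ^ Suc n"] Pp Px0 \<epsilon> by auto
      then show ?thesis by blast
    qed
  qed
  then obtain W where W: "\<And>n. open (W n)" "\<And>n. P \<noteq> {} \<Longrightarrow> {z. from_nat_into P n z = 0} \<subseteq> W n"
    "\<And>n. x0 \<notin> W n" "\<And>n. emeasure lebesgue (W n) \<le> ennreal (\<epsilon> / 4 * (1/2) ^ Suc n)"
    by metis
  define E where "E = Y - bad1 - (\<Union>n. W n)"
  have EY: "E \<subseteq> Y" by (auto simp: E_def)
  have Ecomp: "compact E"
  proof -
    have "E = Y \<inter> - (bad1 \<union> (\<Union>n. W n))" by (auto simp: E_def)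
    moreover have "closed (- (bad1 \<union> (\<Union>n. W n)))" using bad1_open W(1) by (intro closed_Compl) auto
    ultimately show ?thesis using Yc by (simp add: compact_Int_closed)
  qed
  have Ebad: "u \<bullet> b \<notin> G b" if "u \<in> E" "b \<in> Basis" for u b
    using that by (auto simp: E_def bad1_def)
  have x0E: "x0 \<in> E"
  proof -
    have "x0 \<notin> bad1" by (auto simp: bad1_def G_def not_in_Gap)
    then show ?thesis using x0Y W(3) by (auto simp: E_def)
  qed
  have Enon: "E \<noteq> {}" using x0E by auto
  have zeros: "\<forall>p\<in>P. \<forall>z\<in>E. p z \<noteq> 0"
  proof (intro ballI notI)
    fix p z assume p: "p \<in> P" and z: "z \<in> E" and pz: "p z = 0"
    obtain n where n: "from_nat_into P n = p" using from_nat_into_surj[OF Pc p] by blast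
    have "z \<in> W n" using W(2)[of n] p n pz by auto
    then show False using z by (auto simp: E_def)
  qed
  have meas: "emeasure lebesgue (Y - E) < ennreal \<epsilon>"
  proof -
    define A where "A = (\<Union>b\<in>Basis. Y \<inter> {u::complex^'n. u \<bullet> b \<in> G b})"
    define B where "B = (\<Union>n. W n)"
    have Ysets: "Y \<in> sets lebesgue" using Yc by (simp add: compact_imp_closed borel_closed)
    have As: "(\<lambda>b. Y \<inter> {u::complex^'n. u \<bullet> b \<in> G b}) ` Basis \<subseteq> sets lebesgue"
      using open_slab Ysets by (auto simp: borel_open)
    have Bs: "range W \<subseteq> sets lebesgue" using W(1) by (auto simp: borel_open)
    have Asets: "A \<in> sets lebesgue"
    proof -
      have "A = Y \<inter> bad1" by (auto simp: A_def bad1_def)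
      moreover have "bad1 \<in> sets lebesgue" using bad1_open by (simp add: borel_open)
      ultimately show ?thesis using Ysets by simp
    qed
    have Bsets: "B \<in> sets lebesgue"
    proof -
      have "open B" unfolding B_def using W(1) by auto
      then show ?thesis by (simp add: borel_open)
    qed
    have "Y - E \<subseteq> A \<union> B" by (auto simp: E_def A_def B_def bad1_def)
    then have "emeasure lebesgue (Y - E) \<le> emeasure lebesgue (A \<union> B)"
      by (rule emeasure_mono) (use Asets Bsets in auto)
    also have "\<dots> \<le> emeasure lebesgue A + emeasure lebesgue B"
      by (rule emeasure_subadditive[OF Asets Bsets])
    finally have YE: "emeasure lebesgue (Y - E) \<le> emeasure lebesgue A + emeasure lebesgue B" .
    have mA: "emeasure lebesgue A \<le> ennreal (\<epsilon> / 4)"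
    proof -
      have "emeasure lebesgue A \<le> (\<Sum>b\<in>Basis. emeasure lebesgue (Y \<inter> {u::complex^'n. u \<bullet> b \<in> G b}))"
        unfolding A_def by (rule emeasure_subadditive_finite[OF _ As]) simp
      also have "\<dots> \<le> (\<Sum>b\<in>(Basis::(complex^'n) set). ennreal (2 * \<eta> * C))"
      proof (rule sum_mono)
        fix b :: "complex^'n" assume "b \<in> Basis"
        show "emeasure lebesgue (Y \<inter> {u. u \<bullet> b \<in> G b}) \<le> ennreal (2 * \<eta> * C)"
          unfolding G_def C_def D_def by (rule gap_measure[OF R \<open>b \<in> Basis\<close> \<eta> Ysets])
      qed
      also have "\<dots> = ennreal (\<Sum>b\<in>(Basis::(complex^'n) set). 2 * \<eta> * C)"
        by (rule sum_ennreal) (use \<eta> C in auto)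
      also have "(\<Sum>b\<in>(Basis::(complex^'n) set). 2 * \<eta> * C) = real D * (2 * \<eta> * C)"
        by (simp add: D_def)
      also have "\<dots> \<le> ennreal (\<epsilon> / 4)" using \<eta>D by (rule ennreal_leI)
      finally show ?thesis .
    qed
    have mB: "emeasure lebesgue B \<le> ennreal (\<epsilon> / 4)"
    proof -
      have "emeasure lebesgue B \<le> (\<Sum>n. emeasure lebesgue (W n))"
        unfolding B_def by (rule emeasure_subadditive_countably[OF Bs])
      also have "\<dots> \<le> (\<Sum>n. ennreal (\<epsilon> / 4 * (1/2) ^ Suc n))"
        by (rule suminf_le) (use W(4) in auto)
      also have "\<dots> = ennreal (\<epsilon> / 4 * 1)"
        by (intro suminf_ennreal_eq sums_mult power_half_series) (use \<epsilon> in auto)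
      finally show ?thesis by simp
    qed
    have "emeasure lebesgue A + emeasure lebesgue B \<le> ennreal (\<epsilon> / 4) + ennreal (\<epsilon> / 4)"
      using mA mB by (rule add_mono)
    also have "ennreal (\<epsilon> / 4) + ennreal (\<epsilon> / 4) = ennreal (\<epsilon> / 2)"
      using \<epsilon> by (simp flip: ennreal_plus)
    also have "\<dots> < ennreal \<epsilon>" using \<epsilon> by (simp add: ennreal_lessI)
    finally show ?thesis using YE by (rule order.strict_trans1[rotated])
  qed
  have td: "totally_disconnected E"
    unfolding totally_disconnected_def
  proof (intro ballI)
    fix x assume x: "x \<in> E"
    show "connected_component_set E x = {x}"
    proof
      have "connected_component E x x" using x by (rule connected_component_refl)
      then show "{x} \<subseteq> connected_component_set E x" by simp
      show "connected_component_set E x \<subseteq> {x}"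
      proof
        fix y assume "y \<in> connected_component_set E x"
        then have "connected_component E x y" by simp
        then obtain T where T: "connected T" "T \<subseteq> E" "x \<in> T" "y \<in> T"
          unfolding connected_component_def by blast
        have "x \<bullet> b = y \<bullet> b" if b: "b \<in> Basis" for b
        proof (rule connected_avoid_Gap[OF \<eta>])
          show "connected ((\<lambda>u. u \<bullet> b) ` T)"
            by (intro connected_continuous_image continuous_intros T(1))
          show "(\<lambda>u. u \<bullet> b) ` T \<inter> Gap \<eta> (x0 \<bullet> b) = {}"
          proof (rule equals0I)
            fix v assume "v \<in> (\<lambda>u. u \<bullet> b) ` T \<inter> Gap \<eta> (x0 \<bullet> b)"
            then obtain u where "u \<in> T" "u \<bullet> b \<in> Gap \<eta> (x0 \<bullet> b)" by blast
            then show False using Ebad[of u b] T(2) b unfolding G_def by blast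
          qed
          show "x \<bullet> b \<in> (\<lambda>u. u \<bullet> b) ` T" "y \<bullet> b \<in> (\<lambda>u. u \<bullet> b) ` T" using T by auto
        qed
        then have "x = y" by (rule euclidean_eqI)
        then show "y \<in> {x}" by simp
      qed
    qed
  qed
  have pc: "polynomially_convex E"
    unfolding polynomially_convex_def
  proof
    show "E \<subseteq> poly_hull E"
    proof
      fix z assume z: "z \<in> E"
      show "z \<in> poly_hull E" unfolding poly_hull_def
      proof (intro CollectI allI impI)
        fix p :: "complex^'n \<Rightarrow> complex" assume "cpoly p"
        then have cp: "continuous_on E (\<lambda>x. norm (p x))"
          using cpoly_continuous continuous_on_subset continuous_on_norm by blast
        have "bounded ((\<lambda>x. norm (p x)) ` E)"
          using compact_continuous_image[OF cp Ecomp] compact_imp_bounded by blast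
        then have "bdd_above ((\<lambda>x. norm (p x)) ` E)" by (rule bounded_imp_bdd_above)
        then show "norm (p z) \<le> (SUP x\<in>E. norm (p x))" using z by (rule cSUP_upper2) simp
      qed
    qed
    show "poly_hull E \<subseteq> E"
    proof
      fix z assume zh: "z \<in> poly_hull E"
      show "z \<in> E"
      proof (rule ccontr)
        assume z: "z \<notin> E"
        have H: "gapok E (\<lambda>u. Re (u$k)) \<and> gapok E (\<lambda>u. Im (u$k))" for k
        proof
          have b1: "axis k (1::complex) \<in> Basis" by simp
          show "gapok E (\<lambda>u. Re (u$k))"
          proof (rule gapok_Gap[OF \<eta>])
            show "\<forall>u\<in>E. Re (u$k) \<notin> Gap \<eta> (x0 \<bullet> axis k 1)"
              using Ebad[OF _ b1] by (simp add: G_def inner_axis)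
          qed
          have b2: "axis k \<i> \<in> Basis" by simp
          show "gapok E (\<lambda>u. Im (u$k))"
          proof (rule gapok_Gap[OF \<eta>])
            show "\<forall>u\<in>E. Im (u$k) \<notin> Gap \<eta> (x0 \<bullet> axis k \<i>)"
              using Ebad[OF _ b2] by (simp add: G_def inner_axis)
          qed
        qed
        obtain Q where Q: "cpoly Q" "\<forall>u\<in>E. norm (Q u) < norm (Q z)"
          using separate[OF Ecomp Enon z H] by blast
        have cq: "continuous_on E (\<lambda>x. norm (Q x))"
          using cpoly_continuous[OF Q(1)] continuous_on_subset continuous_on_norm by blast
        obtain u0 where u0: "u0 \<in> E" "\<forall>u\<in>E. norm (Q u) \<le> norm (Q u0)"
          using continuous_attains_sup[OF Ecomp Enon cq] by blast
        have "(SUP x\<in>E. norm (Q x)) \<le> norm (Q u0)" using u0 Enon by (intro cSUP_least) auto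
        also have "\<dots> < norm (Q z)" using Q(2) u0(1) by blast
        finally have "(SUP x\<in>E. norm (Q x)) < norm (Q z)" .
        moreover have "norm (Q z) \<le> (SUP x\<in>E. norm (Q x))" using zh Q(1) by (auto simp: poly_hull_def)
        ultimately show False by simp
      qed
    qed
  qed
  show ?thesis using td Ecomp pc x0E EY zeros meas by blast
qed

end
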